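(* Let $R$, $G$, $*$, $\sigma$ and $\mathcal{S}$ be as in the context. If $\mathcal{S}$ is anticommutative, then $(x^2,y)=1$ for all $x,y\in G\setminus G_*$.
   Context: Throughout, $R$ is a commutative ring with unity with $\operatorname{char}(R)\neq 2$, and $\mathcal{U}(R)$ is its unit group. $G$ is a group with an involution $*$, i.e. a map $x\mapsto x^*$ with $(xy)^*=y^*x^*$ and $(x^* )^*=x$. The map $\sigma:G\to\mathcal{U}(R)$ is a nontrivial group homomorphism with kernel $N=\ker\sigma$, and it is compatible with $*$: $xx^*\in N$ for all $x\in G$. The group ring $RG$ carries the involution $\left(\sum_{x\in G}\alpha_x x\right)^{\sigma*}=\sum_{x\in G}\sigma(x)\alpha_x x^*$. Write $G_*=\{x\in G: x^*=x\}$ and $N_*=G_*\cap N$. Let $\mathcal{S}$ be the $R$-submodule of $RG$ spanned by the union of the following three sets: - $2\mathcal{S}_1=\{2x: x\in N_*\}$; - $\mathcal{S}_2=\{\alpha x: x\in G_*\setminus N,\ \alpha\in R,\ \alpha(1-\sigma(x))=0\}$; - $\mathcal{S}_3=\{x+\sigma(x)x^*: x\in G\setminus G_*\}$. $\mathcal{S}$ is called anticommutative if $ab+ba=0$ for all $a,b\in\mathcal{S}$. The commutator is $(x,y)=x^{-1}y^{-1}xy$. *)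

theory Defs
  imports "HOL-Algebra.Group"
begin

text \<open>Group ring RG: elements are functions G -> R (finitely supported, vanishing
outside the carrier).  The group G is a HOL-Algebra group; the ring R is a type
of class comm_ring_1.\<close>

definition rg_delta :: "'g \<Rightarrow> 'g \<Rightarrow> 'r::comm_ring_1" where
  "rg_delta x = (\<lambda>z. if z = x then 1 else 0)"

definition rg_smult :: "'r::comm_ring_1 \<Rightarrow> ('g \<Rightarrow> 'r) \<Rightarrow> ('g \<Rightarrow> 'r)" where
  "rg_smult c a = (\<lambda>z. c * a z)"

definition rg_add :: "('g \<Rightarrow> 'r::comm_ring_1) \<Rightarrow> ('g \<Rightarrow> 'r) \<Rightarrow> ('g \<Rightarrow> 'r)" where
  "rg_add a b = (\<lambda>z. a z + b z)"

definition rg_zero :: "'g \<Rightarrow> 'r::comm_ring_1" where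
  "rg_zero = (\<lambda>z. 0)"

definition rg_mult :: "('g, 'b) monoid_scheme \<Rightarrow> ('g \<Rightarrow> 'r::comm_ring_1) \<Rightarrow> ('g \<Rightarrow> 'r) \<Rightarrow> ('g \<Rightarrow> 'r)" where
  "rg_mult G a b = (\<lambda>z. if z \<in> carrier G
      then (\<Sum>x\<in>{x \<in> carrier G. a x \<noteq> 0}. a x * b (inv\<^bsub>G\<^esub> x \<otimes>\<^bsub>G\<^esub> z))
      else 0)"

definition group_involution :: "('g, 'b) monoid_scheme \<Rightarrow> ('g \<Rightarrow> 'g) \<Rightarrow> bool" where
  "group_involution G st \<longleftrightarrow>
     (\<forall>x\<in>carrier G. st x \<in> carrier G) \<and>
     (\<forall>x\<in>carrier G. \<forall>y\<in>carrier G. st (x \<otimes>\<^bsub>G\<^esub> y) = st y \<otimes>\<^bsub>G\<^esub> st x) \<and>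
     (\<forall>x\<in>carrier G. st (st x) = x)"

definition unit_hom :: "('g, 'b) monoid_scheme \<Rightarrow> ('g \<Rightarrow> 'r::comm_ring_1) \<Rightarrow> bool" where
  "unit_hom G \<sigma> \<longleftrightarrow>
     (\<forall>x\<in>carrier G. \<sigma> x dvd 1) \<and>
     (\<forall>x\<in>carrier G. \<forall>y\<in>carrier G. \<sigma> (x \<otimes>\<^bsub>G\<^esub> y) = \<sigma> x * \<sigma> y)"

definition ker_sigma :: "('g, 'b) monoid_scheme \<Rightarrow> ('g \<Rightarrow> 'r::comm_ring_1) \<Rightarrow> 'g set" where
  "ker_sigma G \<sigma> = {x \<in> carrier G. \<sigma> x = 1}"

definition sym_elems :: "('g, 'b) monoid_scheme \<Rightarrow> ('g \<Rightarrow> 'g) \<Rightarrow> 'g set" where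
  "sym_elems G st = {x \<in> carrier G. st x = x}"

definition S_gens :: "('g, 'b) monoid_scheme \<Rightarrow> ('g \<Rightarrow> 'g) \<Rightarrow> ('g \<Rightarrow> 'r::comm_ring_1) \<Rightarrow> ('g \<Rightarrow> 'r) set" where
  "S_gens G st \<sigma> =
     {rg_smult 2 (rg_delta x) | x. x \<in> sym_elems G st \<inter> ker_sigma G \<sigma>}
   \<union> {rg_smult \<alpha> (rg_delta x) | x \<alpha>. x \<in> sym_elems G st - ker_sigma G \<sigma> \<and> \<alpha> * (1 - \<sigma> x) = 0}
   \<union> {rg_add (rg_delta x) (rg_smult (\<sigma> x) (rg_delta (st x))) | x. x \<in> carrier G - sym_elems G st}"

inductive_set S_span :: "('g, 'b) monoid_scheme \<Rightarrow> ('g \<Rightarrow> 'g) \<Rightarrow> ('g \<Rightarrow> 'r::comm_ring_1) \<Rightarrow> ('g \<Rightarrow> 'r) set"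
  for G st \<sigma> where
  zero: "rg_zero \<in> S_span G st \<sigma>"
| gen: "a \<in> S_gens G st \<sigma> \<Longrightarrow> a \<in> S_span G st \<sigma>"
| add: "a \<in> S_span G st \<sigma> \<Longrightarrow> b \<in> S_span G st \<sigma> \<Longrightarrow> rg_add a b \<in> S_span G st \<sigma>"
| smult: "a \<in> S_span G st \<sigma> \<Longrightarrow> rg_smult c a \<in> S_span G st \<sigma>"

definition anticommutative :: "('g, 'b) monoid_scheme \<Rightarrow> ('g \<Rightarrow> 'r::comm_ring_1) set \<Rightarrow> bool" where
  "anticommutative G S \<longleftrightarrow>
     (\<forall>a\<in>S. \<forall>b\<in>S. rg_add (rg_mult G a b) (rg_mult G b a) = rg_zero)"

definition gcomm :: "('g, 'b) monoid_scheme \<Rightarrow> 'g \<Rightarrow> 'g \<Rightarrow> 'g" where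
  "gcomm G x y = inv\<^bsub>G\<^esub> x \<otimes>\<^bsub>G\<^esub> inv\<^bsub>G\<^esub> y \<otimes>\<^bsub>G\<^esub> x \<otimes>\<^bsub>G\<^esub> y"

end

theory Submission
  imports Defs
begin


lemma rg_mult_sum:
  assumes "finite A" "A \<subseteq> carrier G"
    and "\<And>x. x \<in> carrier G \<Longrightarrow> a x \<noteq> 0 \<Longrightarrow> x \<in> A" "z \<in> carrier G"
  shows "rg_mult G a b z = (\<Sum>x\<in>A. a x * b (inv\<^bsub>G\<^esub> x \<otimes>\<^bsub>G\<^esub> z))"
proof -
  have "(\<Sum>x\<in>{x \<in> carrier G. a x \<noteq> 0}. a x * b (inv\<^bsub>G\<^esub> x \<otimes>\<^bsub>G\<^esub> z))
      = (\<Sum>x\<in>A. a x * b (inv\<^bsub>G\<^esub> x \<otimes>\<^bsub>G\<^esub> z))"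
    by (rule sum.mono_neutral_left) (use assms in auto)
  then show ?thesis using assms(4) by (simp add: rg_mult_def)
qed

lemma two_ne_zero_char:
  assumes "CHAR('r::comm_ring_1) \<noteq> 2" and "(1::'r) \<noteq> 0"
  shows "(2::'r) \<noteq> 0"
proof
  assume "(2::'r) = 0"
  then have "of_nat 2 = (0::'r)" by simp
  then have d: "CHAR('r) dvd 2" using of_nat_eq_0_iff_char_dvd[of 2, where 'a='r] by simp
  then have "CHAR('r) \<le> 2" "CHAR('r) \<noteq> 0" using dvd_imp_le[OF d] d by (auto intro!: Nat.gr0I)
  then have "CHAR('r) = 1 \<or> CHAR('r) = 2" by linarith
  moreover have "CHAR('r) \<noteq> 1"
  proof
    assume "CHAR('r) = 1"
    then have "of_nat 1 = (0::'r)" using of_nat_CHAR[where 'a='r] by simp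
    with assms(2) show False by simp
  qed
  ultimately show False using assms(1) by simp
qed



context group begin

lemma combi:
  assumes inv: "group_involution G st"
    and x: "x \<in> carrier G" "st x \<noteq> x" and y: "y \<in> carrier G" "st y \<noteq> y"
    and P1: "st x \<otimes> st x = x \<otimes> x"
    and D: "\<And>v. v \<in> carrier G \<Longrightarrow> st v \<noteq> v \<Longrightarrow>
              (x \<otimes> x) \<otimes> v = v \<otimes> (x \<otimes> x) \<or>
              (x \<otimes> x) \<otimes> v = st v \<otimes> (x \<otimes> x)"
  shows "(x \<otimes> x) \<otimes> y = y \<otimes> (x \<otimes> x)"
proof (rule ccontr)
  have stc: "\<And>u. u \<in> carrier G \<Longrightarrow> st u \<in> carrier G"
    and stm: "\<And>u v. u \<in> carrier G \<Longrightarrow> v \<in> carrier G \<Longrightarrow> st (u \<otimes> v) = st v \<otimes> st u"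
    and sts: "\<And>u. u \<in> carrier G \<Longrightarrow> st (st u) = u"
    using inv unfolding group_involution_def by auto
  define p where "p = x \<otimes> x"
  have p: "p \<in> carrier G" using x by (simp add: p_def)
  have xs: "st x \<in> carrier G" and ys: "st y \<in> carrier G" using x y stc by auto
  assume ne: "(x \<otimes> x) \<otimes> y \<noteq> y \<otimes> (x \<otimes> x)"
  then have ne': "p \<otimes> y \<noteq> y \<otimes> p" by (simp add: p_def)
  have D1: "p \<otimes> y = st y \<otimes> p" using D[OF y] ne by (auto simp: p_def)
  have D2: "p \<otimes> st y = y \<otimes> p"
  proof -
    have "st (st y) \<noteq> st y" using y sts by simp
    then have "p \<otimes> st y = st y \<otimes> p \<or> p \<otimes> st y = y \<otimes> p"
      using D[OF ys] sts[OF y(1)] by (simp add: p_def)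
    moreover have "p \<otimes> st y \<noteq> st y \<otimes> p"
    proof
      assume "p \<otimes> st y = st y \<otimes> p"
      with D1 have "p \<otimes> st y = p \<otimes> y" by simp
      then show False using y p ys by simp
    qed
    ultimately show ?thesis by blast
  qed
  have px: "p \<otimes> x = x \<otimes> p" using x by (simp add: p_def m_assoc)
  have pxy: "p \<otimes> (x \<otimes> y) = x \<otimes> (st y \<otimes> p)"
    using D1 x y p by (simp add: m_assoc[symmetric] px) (simp add: m_assoc)
  have pxy': "p \<otimes> (x \<otimes> st y) = x \<otimes> (y \<otimes> p)"
    using D2 x y p ys by (simp add: m_assoc[symmetric] px) (simp add: m_assoc)
  have A: "x \<otimes> y = st y \<otimes> st x \<or> x \<otimes> st y = st y \<otimes> st x"
  proof (cases "st (x \<otimes> y) = x \<otimes> y")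
    case True then show ?thesis using stm x y by simp
  next
    case False
    then have "p \<otimes> (x \<otimes> y) = (x \<otimes> y) \<otimes> p \<or> p \<otimes> (x \<otimes> y) = st (x \<otimes> y) \<otimes> p"
      using D[of "x \<otimes> y"] x y by (simp add: p_def)
    moreover have "p \<otimes> (x \<otimes> y) \<noteq> (x \<otimes> y) \<otimes> p"
    proof
      assume "p \<otimes> (x \<otimes> y) = (x \<otimes> y) \<otimes> p"
      then have "x \<otimes> (st y \<otimes> p) = x \<otimes> (y \<otimes> p)" using pxy x y p by (simp add: m_assoc)
      then have "st y = y" using x y p ys by simp
      then show False using y by simp
    qed
    ultimately have "x \<otimes> (st y \<otimes> p) = (st y \<otimes> st x) \<otimes> p" using pxy stm x y by simp
    then have "(x \<otimes> st y) \<otimes> p = (st y \<otimes> st x) \<otimes> p" using x ys p by (simp add: m_assoc)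
    then show ?thesis using x xs ys p by simp
  qed
  have B: "x \<otimes> st y = y \<otimes> st x \<or> x \<otimes> y = y \<otimes> st x"
  proof (cases "st (x \<otimes> st y) = x \<otimes> st y")
    case True then show ?thesis using stm x ys sts y by simp
  next
    case False
    then have "p \<otimes> (x \<otimes> st y) = (x \<otimes> st y) \<otimes> p \<or> p \<otimes> (x \<otimes> st y) = st (x \<otimes> st y) \<otimes> p"
      using D[of "x \<otimes> st y"] x ys by (simp add: p_def)
    moreover have "p \<otimes> (x \<otimes> st y) \<noteq> (x \<otimes> st y) \<otimes> p"
    proof
      assume "p \<otimes> (x \<otimes> st y) = (x \<otimes> st y) \<otimes> p"
      then have "x \<otimes> (y \<otimes> p) = x \<otimes> (st y \<otimes> p)" using pxy' x ys p by (simp add: m_assoc)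
      then have "st y = y" using x y p ys by simp
      then show False using y by simp
    qed
    ultimately have "x \<otimes> (y \<otimes> p) = (y \<otimes> st x) \<otimes> p" using pxy' stm x ys sts y by simp
    then have "(x \<otimes> y) \<otimes> p = (y \<otimes> st x) \<otimes> p" using x y p by (simp add: m_assoc)
    then show ?thesis using x xs y p by simp
  qed
  have fin: "x \<otimes> y = y \<otimes> st x \<Longrightarrow> p \<otimes> y = y \<otimes> p"
  proof -
    assume h: "x \<otimes> y = y \<otimes> st x"
    have "p \<otimes> y = x \<otimes> (x \<otimes> y)" using x y by (simp add: p_def m_assoc)
    also have "\<dots> = x \<otimes> (y \<otimes> st x)" using h by simp
    also have "\<dots> = (x \<otimes> y) \<otimes> st x" using x y xs by (simp add: m_assoc)
    also have "\<dots> = (y \<otimes> st x) \<otimes> st x" using h by simp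
    also have "\<dots> = y \<otimes> (st x \<otimes> st x)" using x y xs by (simp add: m_assoc)
    also have "\<dots> = y \<otimes> p" using P1 by (simp add: p_def)
    finally show ?thesis .
  qed
  have fin2: "x \<otimes> y = st y \<otimes> st x \<Longrightarrow> x \<otimes> st y = y \<otimes> st x \<Longrightarrow> p \<otimes> y = y \<otimes> p"
  proof -
    assume h1: "x \<otimes> y = st y \<otimes> st x" and h2: "x \<otimes> st y = y \<otimes> st x"
    have "p \<otimes> y = x \<otimes> (x \<otimes> y)" using x y by (simp add: p_def m_assoc)
    also have "\<dots> = x \<otimes> (st y \<otimes> st x)" using h1 by simp
    also have "\<dots> = (x \<otimes> st y) \<otimes> st x" using x ys xs by (simp add: m_assoc)
    also have "\<dots> = (y \<otimes> st x) \<otimes> st x" using h2 by simp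
    also have "\<dots> = y \<otimes> (st x \<otimes> st x)" using y xs by (simp add: m_assoc)
    also have "\<dots> = y \<otimes> p" using P1 by (simp add: p_def)
    finally show ?thesis .
  qed
  have c1: "x \<otimes> y \<noteq> y \<otimes> st x" using fin ne' by blast
  with B have b: "x \<otimes> st y = y \<otimes> st x" by blast
  with A fin2 ne' have "x \<otimes> st y = st y \<otimes> st x" by blast
  with b have "y \<otimes> st x = st y \<otimes> st x" by simp
  then have "y = st y" using y ys xs by simp
  then show False using y by simp
qed

end



context group begin

lemma mult_delta_left:
  assumes "g \<in> carrier G" "z \<in> carrier G"
  shows "rg_mult G (rg_smult c (rg_delta g)) b z = c * b (inv g \<otimes> z)"
proof -
  have "rg_mult G (rg_smult c (rg_delta g)) b z
      = (\<Sum>u\<in>{g}. rg_smult c (rg_delta g) u * b (inv u \<otimes> z))"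
    by (rule rg_mult_sum) (use assms in \<open>auto simp: rg_smult_def rg_delta_def split: if_splits\<close>)
  then show ?thesis by (simp add: rg_smult_def rg_delta_def)
qed

lemma mult_aw_left:
  assumes "w \<in> carrier G" "st w \<in> carrier G" "st w \<noteq> w" "z \<in> carrier G"
  shows "rg_mult G (rg_add (rg_delta w) (rg_smult s (rg_delta (st w)))) b z
       = b (inv w \<otimes> z) + s * b (inv (st w) \<otimes> z)"
proof -
  have "rg_mult G (rg_add (rg_delta w) (rg_smult s (rg_delta (st w)))) b z
      = (\<Sum>u\<in>{w, st w}. rg_add (rg_delta w) (rg_smult s (rg_delta (st w))) u * b (inv u \<otimes> z))"
    by (rule rg_mult_sum) (use assms in \<open>auto simp: rg_add_def rg_smult_def rg_delta_def split: if_splits\<close>)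
  then show ?thesis using assms(3) by (simp add: rg_add_def rg_smult_def rg_delta_def)
qed

end



theorem lemma3p8:
  fixes G :: "('g, 'b) monoid_scheme"
    and st :: "'g \<Rightarrow> 'g"
    and \<sigma> :: "'g \<Rightarrow> 'r::comm_ring_1"
  assumes "group G"
    and "CHAR('r) \<noteq> 2"
    and "group_involution G st"
    and "unit_hom G \<sigma>"
    and "\<exists>x\<in>carrier G. \<sigma> x \<noteq> 1"
    and "\<forall>x\<in>carrier G. \<sigma> (x \<otimes>\<^bsub>G\<^esub> st x) = 1"
    and "anticommutative G (S_span G st \<sigma>)"
  shows "\<forall>x\<in>carrier G - sym_elems G st. \<forall>y\<in>carrier G - sym_elems G st.
           gcomm G (x \<otimes>\<^bsub>G\<^esub> x) y = \<one>\<^bsub>G\<^esub>"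
proof (intro ballI)
  interpret group G by (fact assms(1))
  have stc: "\<And>u. u \<in> carrier G \<Longrightarrow> st u \<in> carrier G"
    and stm: "\<And>u v. u \<in> carrier G \<Longrightarrow> v \<in> carrier G \<Longrightarrow> st (u \<otimes>\<^bsub>G\<^esub> v) = st v \<otimes>\<^bsub>G\<^esub> st u"
    and sts: "\<And>u. u \<in> carrier G \<Longrightarrow> st (st u) = u"
    using assms(3) unfolding group_involution_def by auto
  have sigm: "\<And>u v. u \<in> carrier G \<Longrightarrow> v \<in> carrier G \<Longrightarrow> \<sigma> (u \<otimes>\<^bsub>G\<^esub> v) = \<sigma> u * \<sigma> v"
    using assms(4) unfolding unit_hom_def by auto
  have one_ne: "(1::'r) \<noteq> 0"
  proof
    assume "(1::'r) = 0"
    then have "\<And>r::'r. r = 1" by (metis mult_1 mult_zero_left)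
    then show False using assms(5) by blast
  qed
  have two: "(2::'r) \<noteq> 0" using two_ne_zero_char[OF assms(2) one_ne] .
  have AC: "\<And>a b z. a \<in> S_span G st \<sigma> \<Longrightarrow> b \<in> S_span G st \<sigma> \<Longrightarrow>
      rg_mult G a b z + rg_mult G b a z = 0"
  proof -
    fix a b z assume "a \<in> S_span G st \<sigma>" "b \<in> S_span G st \<sigma>"
    then have "rg_add (rg_mult G a b) (rg_mult G b a) = rg_zero"
      using assms(7) unfolding anticommutative_def by blast
    then show "rg_mult G a b z + rg_mult G b a z = 0"
      by (metis rg_add_def rg_zero_def)
  qed
  have aw: "\<And>w. w \<in> carrier G \<Longrightarrow> st w \<noteq> w \<Longrightarrow>
      rg_add (rg_delta w) (rg_smult (\<sigma> w) (rg_delta (st w))) \<in> S_span G st \<sigma>"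
    by (rule S_span.gen) (auto simp: S_gens_def sym_elems_def)
  have awv: "\<And>w u. st w \<noteq> w \<Longrightarrow> rg_add (rg_delta w) (rg_smult (\<sigma> w) (rg_delta (st w))) u
      = (if u = w then 1 else 0) + \<sigma> w * (if u = st w then 1 else 0)"
    by (simp add: rg_add_def rg_smult_def rg_delta_def)
  have st1: "st \<one>\<^bsub>G\<^esub> = \<one>\<^bsub>G\<^esub>"
  proof -
    have "st \<one>\<^bsub>G\<^esub> = st \<one>\<^bsub>G\<^esub> \<otimes>\<^bsub>G\<^esub> st \<one>\<^bsub>G\<^esub>" using stm[of "\<one>\<^bsub>G\<^esub>" "\<one>\<^bsub>G\<^esub>"] by simp
    then show ?thesis using stc[of "\<one>\<^bsub>G\<^esub>"]
      by (metis one_closed r_cancel_one')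
  qed
  have sig1: "\<sigma> \<one>\<^bsub>G\<^esub> = 1"
  proof -
    have "\<sigma> \<one>\<^bsub>G\<^esub> dvd 1" using assms(4) unfolding unit_hom_def by auto
    then obtain k where k: "1 = \<sigma> \<one>\<^bsub>G\<^esub> * k" by (auto simp: dvd_def)
    have "\<sigma> \<one>\<^bsub>G\<^esub> = \<sigma> \<one>\<^bsub>G\<^esub> * \<sigma> \<one>\<^bsub>G\<^esub>" using sigm[of "\<one>\<^bsub>G\<^esub>" "\<one>\<^bsub>G\<^esub>"] by simp
    then have "\<sigma> \<one>\<^bsub>G\<^esub> * k = \<sigma> \<one>\<^bsub>G\<^esub> * \<sigma> \<one>\<^bsub>G\<^esub> * k" by simp
    then show ?thesis using k by (simp add: mult.assoc)
  qed
  fix x y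
  assume xm: "x \<in> carrier G - sym_elems G st" and ym: "y \<in> carrier G - sym_elems G st"
  then have x: "x \<in> carrier G" "st x \<noteq> x" and y: "y \<in> carrier G" "st y \<noteq> y"
    by (auto simp: sym_elems_def)
  have xs: "st x \<in> carrier G" using stc x by auto
  define ax where "ax = rg_add (rg_delta x) (rg_smult (\<sigma> x) (rg_delta (st x)))"
  have axS: "ax \<in> S_span G st \<sigma>" using aw[OF x] by (simp add: ax_def)
  have four: "(4::'r) = 0"
  proof -
    have d1: "rg_smult 2 (rg_delta \<one>\<^bsub>G\<^esub>) \<in> S_span G st \<sigma>"
      by (rule S_span.gen) (auto simp: S_gens_def sym_elems_def ker_sigma_def st1 sig1)
    have "rg_mult G (rg_smult 2 (rg_delta \<one>\<^bsub>G\<^esub>)) ax x + rg_mult G ax (rg_smult 2 (rg_delta \<one>\<^bsub>G\<^esub>)) x = 0"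
      using AC[OF d1 axS] .
    moreover have "rg_mult G (rg_smult 2 (rg_delta \<one>\<^bsub>G\<^esub>)) ax x = 2"
      using x by (simp add: mult_delta_left ax_def awv)
    moreover have "inv\<^bsub>G\<^esub> (st x) \<otimes>\<^bsub>G\<^esub> x \<noteq> \<one>\<^bsub>G\<^esub>"
      using x xs by (simp add: inv_solve_left')
    moreover have "rg_mult G ax (rg_smult 2 (rg_delta \<one>\<^bsub>G\<^esub>)) x
        = 2 * (if inv\<^bsub>G\<^esub> x \<otimes>\<^bsub>G\<^esub> x = \<one>\<^bsub>G\<^esub> then 1 else 0)
          + \<sigma> x * (2 * (if inv\<^bsub>G\<^esub> (st x) \<otimes>\<^bsub>G\<^esub> x = \<one>\<^bsub>G\<^esub> then 1 else 0))"
      using x xs unfolding ax_def by (subst mult_aw_left) (auto simp: rg_smult_def rg_delta_def)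
    ultimately show ?thesis using x by simp
  qed
  define p where "p = x \<otimes>\<^bsub>G\<^esub> x"
  have p: "p \<in> carrier G" using x by (simp add: p_def)
  have P1: "st x \<otimes>\<^bsub>G\<^esub> st x = x \<otimes>\<^bsub>G\<^esub> x" and P1c: "2 * (1 + \<sigma> x * \<sigma> x) = 0"
  proof -
    have e: "rg_mult G ax ax p + rg_mult G ax ax p = 0" using AC[OF axS axS] .
    have q1: "inv\<^bsub>G\<^esub> x \<otimes>\<^bsub>G\<^esub> p = x" using x p by (simp add: inv_solve_left' p_def)
    have q2: "inv\<^bsub>G\<^esub> (st x) \<otimes>\<^bsub>G\<^esub> p \<noteq> x" using x xs p
      by (simp add: inv_solve_left' p_def)
    have q3: "(inv\<^bsub>G\<^esub> (st x) \<otimes>\<^bsub>G\<^esub> p = st x) = (x \<otimes>\<^bsub>G\<^esub> x = st x \<otimes>\<^bsub>G\<^esub> st x)"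
      using x xs p by (simp add: inv_solve_left' p_def)
    have "rg_mult G ax ax p = 1 + \<sigma> x * (\<sigma> x * (if x \<otimes>\<^bsub>G\<^esub> x = st x \<otimes>\<^bsub>G\<^esub> st x then 1 else 0))"
      using x xs p q1 q2 q3 unfolding ax_def by (simp add: mult_aw_left awv)
    with e have e2: "2 * (1 + \<sigma> x * (\<sigma> x * (if x \<otimes>\<^bsub>G\<^esub> x = st x \<otimes>\<^bsub>G\<^esub> st x then 1 else 0))) = 0"
      by (metis mult_2)
    show "st x \<otimes>\<^bsub>G\<^esub> st x = x \<otimes>\<^bsub>G\<^esub> x"
    proof (rule ccontr)
      assume "st x \<otimes>\<^bsub>G\<^esub> st x \<noteq> x \<otimes>\<^bsub>G\<^esub> x"
      then show False using e2 two by auto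
    qed
    then show "2 * (1 + \<sigma> x * \<sigma> x) = 0" using e2 by simp
  qed
  have psym: "st p = p" using stm[OF x(1) x(1)] P1 by (simp add: p_def)
  have dp: "rg_smult 2 (rg_delta p) \<in> S_span G st \<sigma>"
  proof (cases "\<sigma> p = 1")
    case True
    then show ?thesis
      by (intro S_span.gen) (auto simp: S_gens_def sym_elems_def ker_sigma_def psym p)
  next
    case False
    have "\<sigma> p = \<sigma> x * \<sigma> x" using sigm x by (simp add: p_def)
    then have "2 * (1 - \<sigma> p) = 2 * (1 + \<sigma> x * \<sigma> x) - 4 * (\<sigma> x * \<sigma> x)"
      by (simp add: algebra_simps)
    then have "2 * (1 - \<sigma> p) = 0" using P1c four by (metis mult_zero_left diff_zero)
    then have "rg_smult 2 (rg_delta p) \<in> {rg_smult \<alpha> (rg_delta x) | x \<alpha>. x \<in> sym_elems G st - ker_sigma G \<sigma> \<and> \<alpha> * (1 - \<sigma> x) = 0}"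
      using False by (intro CollectI exI[of _ p] exI[of _ 2]) (auto simp: sym_elems_def ker_sigma_def psym p)
    then show ?thesis
      by (intro S_span.gen) (unfold S_gens_def, blast)
  qed
  have D: "\<And>v. v \<in> carrier G \<Longrightarrow> st v \<noteq> v \<Longrightarrow>
              (x \<otimes>\<^bsub>G\<^esub> x) \<otimes>\<^bsub>G\<^esub> v = v \<otimes>\<^bsub>G\<^esub> (x \<otimes>\<^bsub>G\<^esub> x) \<or>
              (x \<otimes>\<^bsub>G\<^esub> x) \<otimes>\<^bsub>G\<^esub> v = st v \<otimes>\<^bsub>G\<^esub> (x \<otimes>\<^bsub>G\<^esub> x)"
  proof (rule ccontr)
    fix v assume v: "v \<in> carrier G" "st v \<noteq> v"
    assume "\<not> ((x \<otimes>\<^bsub>G\<^esub> x) \<otimes>\<^bsub>G\<^esub> v = v \<otimes>\<^bsub>G\<^esub> (x \<otimes>\<^bsub>G\<^esub> x) \<or>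
              (x \<otimes>\<^bsub>G\<^esub> x) \<otimes>\<^bsub>G\<^esub> v = st v \<otimes>\<^bsub>G\<^esub> (x \<otimes>\<^bsub>G\<^esub> x))"
    then have n1: "p \<otimes>\<^bsub>G\<^esub> v \<noteq> v \<otimes>\<^bsub>G\<^esub> p" and n2: "p \<otimes>\<^bsub>G\<^esub> v \<noteq> st v \<otimes>\<^bsub>G\<^esub> p"
      by (auto simp: p_def)
    have vs: "st v \<in> carrier G" using stc v by auto
    define av where "av = rg_add (rg_delta v) (rg_smult (\<sigma> v) (rg_delta (st v)))"
    have avS: "av \<in> S_span G st \<sigma>" using aw[OF v] by (simp add: av_def)
    define z where "z = p \<otimes>\<^bsub>G\<^esub> v"
    have z: "z \<in> carrier G" using p v by (simp add: z_def)
    have e: "rg_mult G (rg_smult 2 (rg_delta p)) av z + rg_mult G av (rg_smult 2 (rg_delta p)) z = 0"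
      using AC[OF dp avS] .
    have r1: "inv\<^bsub>G\<^esub> p \<otimes>\<^bsub>G\<^esub> z = v" using p v by (simp add: inv_solve_left' z_def)
    have r2: "inv\<^bsub>G\<^esub> v \<otimes>\<^bsub>G\<^esub> z \<noteq> p" using p v n1 by (simp add: inv_solve_left' z_def)
    have r3: "inv\<^bsub>G\<^esub> (st v) \<otimes>\<^bsub>G\<^esub> z \<noteq> p" using p v vs n2 by (simp add: inv_solve_left' z_def)
    have "rg_mult G (rg_smult 2 (rg_delta p)) av z = 2"
      using p z r1 v by (simp add: mult_delta_left av_def awv)
    moreover have "rg_mult G av (rg_smult 2 (rg_delta p)) z = 0"
      using v vs z r2 r3 unfolding av_def by (subst mult_aw_left) (auto simp: rg_smult_def rg_delta_def)
    ultimately show False using e two by simp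
  qed
  have comm: "(x \<otimes>\<^bsub>G\<^esub> x) \<otimes>\<^bsub>G\<^esub> y = y \<otimes>\<^bsub>G\<^esub> (x \<otimes>\<^bsub>G\<^esub> x)"
    by (rule combi[OF assms(3) x y P1 D])
  then have comm': "p \<otimes>\<^bsub>G\<^esub> y = y \<otimes>\<^bsub>G\<^esub> p" by (simp add: p_def)
  have "gcomm G p y = inv\<^bsub>G\<^esub> p \<otimes>\<^bsub>G\<^esub> (inv\<^bsub>G\<^esub> y \<otimes>\<^bsub>G\<^esub> (p \<otimes>\<^bsub>G\<^esub> y))"
    using p y by (simp add: gcomm_def m_assoc)
  also have "\<dots> = inv\<^bsub>G\<^esub> p \<otimes>\<^bsub>G\<^esub> (inv\<^bsub>G\<^esub> y \<otimes>\<^bsub>G\<^esub> (y \<otimes>\<^bsub>G\<^esub> p))" using comm' by simp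
  also have "\<dots> = \<one>\<^bsub>G\<^esub>" using p y by (simp add: m_assoc[symmetric])
  finally show "gcomm G (x \<otimes>\<^bsub>G\<^esub> x) y = \<one>\<^bsub>G\<^esub>" by (simp add: p_def)
qed

end
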